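(* Let $G$ be any finite simple graph, connected or not. Then there exists a connected distance exceptional graph $G''$ containing a copy of $G$ as an induced subgraph. If moreover $G$ is connected and $\iota(G)<\infty$, then $G''$ can be chosen so that this copy is isometric, i.e. $d_{G''}(u,v)=d_G(u,v)$ for all $u,v\in V(G)$.
   Context: For a connected graph $G$ on vertices $v_1,\dots,v_n$, its distance matrix is $D=(d(v_i,v_j))_{i,j=1}^n$, where $d$ is the shortest-path distance; $\vec 1$ denotes the all-ones vector. $G$ is distance exceptional if $D\vec x=\vec 1$ has no solution. A curvature potential is a vector $\vec x$ with $D\vec x=\vec 1$. Curvature index $\iota(G)\in\mathbb{R}\cup\{\infty\}$: if $G$ is distance exceptional or has a curvature potential $\vec x$ with $\vec 1^\top\vec x\neq0$, then $\iota(G)$ is the unique real number with $\{D\vec x:\vec 1^\top\vec x=1\}\cap\mathbb{R}\vec 1=\{\iota(G)\vec 1\}$; otherwise $\iota(G)=\infty$. *)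

theory Defs
  imports "HOL-Analysis.Analysis"
begin

definition simple_graph :: "'a set \<Rightarrow> ('a \<Rightarrow> 'a \<Rightarrow> bool) \<Rightarrow> bool" where
  "simple_graph V E \<longleftrightarrow> finite V \<and> (\<forall>x y. E x y \<longrightarrow> x \<in> V \<and> y \<in> V)
     \<and> (\<forall>x y. E x y \<longrightarrow> E y x) \<and> (\<forall>x. \<not> E x x)"

definition connected_graph :: "'a set \<Rightarrow> ('a \<Rightarrow> 'a \<Rightarrow> bool) \<Rightarrow> bool" where
  "connected_graph V E \<longleftrightarrow> V \<noteq> {} \<and> (\<forall>u\<in>V. \<forall>v\<in>V. E\<^sup>*\<^sup>* u v)"

definition gdist :: "('a \<Rightarrow> 'a \<Rightarrow> bool) \<Rightarrow> 'a \<Rightarrow> 'a \<Rightarrow> nat" where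
  "gdist E u v = (LEAST n. (E ^^ n) u v)"

definition dist_mult :: "'a set \<Rightarrow> ('a \<Rightarrow> 'a \<Rightarrow> bool) \<Rightarrow> ('a \<Rightarrow> real) \<Rightarrow> ('a \<Rightarrow> real)" where
  "dist_mult V E x = (\<lambda>u. if u \<in> V then (\<Sum>v\<in>V. real (gdist E u v) * x v) else 0)"

definition const_vec :: "'a set \<Rightarrow> real \<Rightarrow> ('a \<Rightarrow> real)" where
  "const_vec V t = (\<lambda>u. if u \<in> V then t else 0)"

definition curvature_potential :: "'a set \<Rightarrow> ('a \<Rightarrow> 'a \<Rightarrow> bool) \<Rightarrow> ('a \<Rightarrow> real) \<Rightarrow> bool" where
  "curvature_potential V E x \<longleftrightarrow> dist_mult V E x = const_vec V 1"

definition distance_exceptional :: "'a set \<Rightarrow> ('a \<Rightarrow> 'a \<Rightarrow> bool) \<Rightarrow> bool" where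
  "distance_exceptional V E \<longleftrightarrow> \<not> (\<exists>x. curvature_potential V E x)"

definition curvature_index :: "'a set \<Rightarrow> ('a \<Rightarrow> 'a \<Rightarrow> bool) \<Rightarrow> ereal" where
  "curvature_index V E =
     (if distance_exceptional V E \<or> (\<exists>x. curvature_potential V E x \<and> (\<Sum>v\<in>V. x v) \<noteq> 0)
      then ereal (THE t. {dist_mult V E x | x. (\<Sum>v\<in>V. x v) = 1} \<inter> range (const_vec V)
                          = {const_vec V t})
      else \<infinity>)"

definition induced_embedding ::
  "'a set \<Rightarrow> ('a \<Rightarrow> 'a \<Rightarrow> bool) \<Rightarrow> 'b set \<Rightarrow> ('b \<Rightarrow> 'b \<Rightarrow> bool) \<Rightarrow> ('a \<Rightarrow> 'b) \<Rightarrow> bool" where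
  "induced_embedding V E V' E' f \<longleftrightarrow> inj_on f V \<and> f ` V \<subseteq> V'
     \<and> (\<forall>u\<in>V. \<forall>v\<in>V. E' (f u) (f v) \<longleftrightarrow> E u v)"

end

theory Submission
  imports Defs
begin


section \<open>Walks and distances\<close>

lemma relpowp_sym:
  assumes "\<And>x y. E x y \<Longrightarrow> E y x"
  shows "(E^^n) u v \<Longrightarrow> (E^^n) v u"
proof (induction n arbitrary: v)
  case 0 thus ?case by simp
next
  case (Suc n)
  then obtain w where "(E^^n) u w" "E w v" by (auto elim: relpowp_Suc_E)
  then show ?case using Suc.IH assms by (meson relpowp_Suc_I2)
qed

lemma gdist_sym:
  assumes "\<And>x y. E x y \<Longrightarrow> E y x"
  shows "gdist E u v = gdist E v u"
proof -
  have "\<And>n. (E^^n) u v = (E^^n) v u" using relpowp_sym[of E] assms by blast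
  then show ?thesis unfolding gdist_def by simp
qed

lemma gdist_le: "(E^^n) u v \<Longrightarrow> gdist E u v \<le> n"
  unfolding gdist_def by (rule Least_le)

lemma gdist_walk: "(E^^n) u v \<Longrightarrow> (E^^(gdist E u v)) u v"
  unfolding gdist_def by (rule LeastI)

lemma gdist_self[simp]: "gdist E u u = 0"
  using gdist_le[of 0 E u u] by simp

lemma gdist_zero: "(E^^n) u v \<Longrightarrow> gdist E u v = 0 \<Longrightarrow> u = v"
  using gdist_walk[of n E u v] by simp

lemma walk_lip:
  assumes "\<forall>p q. E p q \<longrightarrow> h q \<le> h p + (1::nat)"
  shows "(E^^n) u v \<Longrightarrow> h v \<le> h u + n"
proof (induction n arbitrary: v)
  case 0 thus ?case by simp
next
  case (Suc n)
  then obtain w where "(E^^n) u w" "E w v" by (auto elim: relpowp_Suc_E)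
  then show ?case using Suc.IH[of w] assms by fastforce
qed

lemma gdist_eqI:
  assumes "(E^^n) u v" "\<forall>p q. E p q \<longrightarrow> h q \<le> h p + (1::nat)" "h u + n \<le> h v"
  shows "gdist E u v = n"
proof -
  have "gdist E u v \<le> n" using assms(1) by (rule gdist_le)
  moreover have "h v \<le> h u + gdist E u v"
    using walk_lip[OF assms(2) gdist_walk[OF assms(1)]] .
  ultimately show ?thesis using assms(3) by linarith
qed

lemma gdist_edge:
  assumes "(E^^n) s p" "E p q"
  shows "gdist E s q \<le> gdist E s p + 1"
proof -
  have "(E^^(Suc (gdist E s p))) s q"
    using gdist_walk[OF assms(1)] assms(2) by (rule relpowp_Suc_I)
  then show ?thesis using gdist_le by fastforce
qed

lemma relpowp_comp: "(E^^m) x y \<Longrightarrow> (E^^n) y z \<Longrightarrow> (E^^(m+n)) x z"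
  by (auto simp: relpowp_add)

lemma relpowp_map:
  assumes "\<And>p q. E p q \<Longrightarrow> E' (f p) (f q)"
  shows "(E^^n) u v \<Longrightarrow> (E'^^n) (f u) (f v)"
proof (induction n arbitrary: v)
  case 0 thus ?case by simp
next
  case (Suc n)
  then obtain w where "(E^^n) u w" "E w v" by (auto elim: relpowp_Suc_E)
  then show ?case using Suc.IH[of w] assms by (meson relpowp_Suc_I)
qed

lemma gdist_one: "E u v \<Longrightarrow> u \<noteq> v \<Longrightarrow> gdist E u v = 1"
proof -
  assume a: "E u v" "u \<noteq> v"
  have w: "(E^^1) u v" using a by (simp only: relpowp_1)
  have "gdist E u v \<le> 1" using gdist_le[OF w] .
  moreover have "gdist E u v \<noteq> 0" using gdist_zero[OF w] a by blast
  ultimately show ?thesis by simp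
qed

lemma gdist_two:
  assumes "E u w" "E w v" "u \<noteq> v" "\<not> E u v"
  shows "gdist E u v = 2"
proof -
  have "(E^^Suc (Suc 0)) u v" using assms relpowp_Suc_I2[of E u w "Suc 0" v] by (simp only: relpowp_Suc_0)
  then have w: "(E^^2) u v" by (simp only: numeral_2_eq_2)
  have le: "gdist E u v \<le> 2" using gdist_le[OF w] .
  have ww: "(E^^(gdist E u v)) u v" using gdist_walk[OF w] .
  have "gdist E u v \<noteq> 0" using gdist_zero[OF w] assms by blast
  moreover have "gdist E u v \<noteq> 1"
  proof
    assume "gdist E u v = 1" then have "(E^^1) u v" using ww by simp
    then show False using assms(4) by (simp only: relpowp_1)
  qed
  ultimately show ?thesis using le by linarith
qed

lemma simple_sym: "simple_graph V E \<Longrightarrow> E x y \<Longrightarrow> E y x"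
  unfolding simple_graph_def by blast

lemma connected_walk: "connected_graph V E \<Longrightarrow> u \<in> V \<Longrightarrow> v \<in> V \<Longrightarrow> \<exists>n. (E^^n) u v"
  unfolding connected_graph_def using rtranclp_power by metis

section \<open>Linear algebra on distance matrices\<close>

lemma pot_rows: "curvature_potential V E x \<Longrightarrow> u \<in> V \<Longrightarrow> (\<Sum>v\<in>V. real (gdist E u v) * x v) = 1"
  unfolding curvature_potential_def dist_mult_def const_vec_def
  by (drule fun_cong[of _ _ u]) simp

lemma pot_rowsI: "(\<And>u. u \<in> V \<Longrightarrow> (\<Sum>v\<in>V. real (gdist E u v) * x v) = 1) \<Longrightarrow> curvature_potential V E x"
  unfolding curvature_potential_def dist_mult_def const_vec_def by auto

lemma sym_bilin:
  assumes "simple_graph V E"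
  shows "(\<Sum>u\<in>V. a u * (\<Sum>v\<in>V. real (gdist E u v) * b v))
       = (\<Sum>v\<in>V. b v * (\<Sum>u\<in>V. real (gdist E v u) * a u))"
proof -
  have s: "\<And>u v. gdist E u v = gdist E v u" using gdist_sym simple_sym[OF assms] by metis
  have "(\<Sum>u\<in>V. a u * (\<Sum>v\<in>V. real (gdist E u v) * b v)) = (\<Sum>u\<in>V. \<Sum>v\<in>V. a u * real (gdist E u v) * b v)"
    by (simp add: sum_distrib_left mult.assoc)
  also have "\<dots> = (\<Sum>v\<in>V. \<Sum>u\<in>V. a u * real (gdist E u v) * b v)" by (rule sum.swap)
  also have "\<dots> = (\<Sum>v\<in>V. b v * (\<Sum>u\<in>V. real (gdist E v u) * a u))"
    by (simp add: sum_distrib_left s mult.commute mult.left_commute)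
  finally show ?thesis .
qed

lemma exc_from_kernel:
  assumes sg: "simple_graph V E"
    and k: "\<And>u. u \<in> V \<Longrightarrow> (\<Sum>v\<in>V. real (gdist E u v) * y v) = 0"
    and s: "(\<Sum>v\<in>V. y v) \<noteq> 0"
  shows "distance_exceptional V E"
  unfolding distance_exceptional_def
proof
  assume "\<exists>x. curvature_potential V E x"
  then obtain x where x: "curvature_potential V E x" by blast
  have "(\<Sum>v\<in>V. y v) = (\<Sum>v\<in>V. y v * (\<Sum>w\<in>V. real (gdist E v w) * x w))"
    using pot_rows[OF x] by simp
  also have "\<dots> = (\<Sum>w\<in>V. x w * (\<Sum>v\<in>V. real (gdist E w v) * y v))"
    by (rule sym_bilin[OF sg])
  also have "\<dots> = 0" using k by simp
  finally show False using s by simp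
qed

lemma pot_sum_eq:
  assumes sg: "simple_graph V E" and x: "curvature_potential V E x" and x': "curvature_potential V E x'"
  shows "(\<Sum>v\<in>V. x v) = (\<Sum>v\<in>V. x' v)"
proof -
  have "(\<Sum>v\<in>V. x v) = (\<Sum>v\<in>V. x v * (\<Sum>w\<in>V. real (gdist E v w) * x' w))"
    using pot_rows[OF x'] by simp
  also have "\<dots> = (\<Sum>w\<in>V. x' w * (\<Sum>v\<in>V. real (gdist E w v) * x v))"
    by (rule sym_bilin[OF sg])
  also have "\<dots> = (\<Sum>v\<in>V. x' v)" using pot_rows[OF x] by simp
  finally show ?thesis .
qed

lemma rat_functional:
  "\<exists>g::real \<Rightarrow> rat. g 1 = 1 \<and> (\<forall>x y. g (x+y) = g x + g y) \<and> (\<forall>q x. g (of_rat q * x) = q * g x)"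
proof -
  interpret Q1: vector_space "(\<lambda>q::rat. \<lambda>x::real. of_rat q * x)"
    by unfold_locales (simp_all add: algebra_simps of_rat_add of_rat_mult)
  interpret Q2: vector_space "(\<lambda>q::rat. \<lambda>r::rat. q * r)"
    by unfold_locales (simp_all add: algebra_simps)
  interpret QP: vector_space_pair "(\<lambda>q::rat. \<lambda>x::real. of_rat q * x)" "(\<lambda>q::rat. \<lambda>r::rat. q * r)"
    by unfold_locales
  have ind: "Q1.independent {1::real}"
    by (rule Q1.independent_insertI) (auto simp: Q1.span_empty Q1.independent_empty)
  obtain g where g: "Vector_Spaces.linear (\<lambda>q::rat. \<lambda>x::real. of_rat q * x) (\<lambda>q::rat. \<lambda>r::rat. q * r) g" "\<forall>x\<in>{1::real}. g x = 1"
    using QP.linear_independent_extend[OF ind, of "\<lambda>_. 1"] by blast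
  show ?thesis
    apply (rule exI[of _ g])
    using g QP.linear_add[OF g(1)] QP.linear_scale[OF g(1)] by auto
qed

lemma pot_sum_rat:
  assumes sg: "simple_graph V E" and x: "curvature_potential V E x"
  shows "(\<Sum>v\<in>V. x v) \<in> \<rat>"
proof -
  obtain g :: "real \<Rightarrow> rat" where g1: "g 1 = 1" and ga: "\<And>x y. g (x+y) = g x + g y"
    and gs: "\<And>q x. g (of_rat q * x) = q * g x" using rat_functional by blast
  have g0: "g 0 = 0" using ga[of 0 0] by simp
  have gsum: "g (sum f A) = (\<Sum>a\<in>A. g (f a))" for f :: "'a \<Rightarrow> real" and A
  proof (cases "finite A")
    case True thus ?thesis by (induction A rule: finite_induct) (simp_all add: g0 ga)
  next
    case False thus ?thesis by (simp add: g0)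
  qed
  have gn: "real_of_rat (g (real n * y)) = real n * real_of_rat (g y)" for n y
    using gs[of "of_nat n" y] by (simp add: of_rat_mult)
  define x' where "x' = (\<lambda>v. real_of_rat (g (x v)))"
  have "curvature_potential V E x'"
  proof (rule pot_rowsI)
    fix u assume u: "u \<in> V"
    have "(\<Sum>v\<in>V. real (gdist E u v) * x' v) = real_of_rat (g (\<Sum>v\<in>V. real (gdist E u v) * x v))"
      unfolding x'_def gsum by (simp add: gn of_rat_sum)
    also have "\<dots> = 1" using pot_rows[OF x u] g1 by simp
    finally show "(\<Sum>v\<in>V. real (gdist E u v) * x' v) = 1" .
  qed
  then have "(\<Sum>v\<in>V. x v) = (\<Sum>v\<in>V. x' v)" using pot_sum_eq[OF sg x] by blast
  also have "\<dots> = real_of_rat (g (\<Sum>v\<in>V. x v))" unfolding x'_def gsum by (simp add: of_rat_sum)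
  finally show ?thesis by (simp add: Rats_def)
qed



lemma transfer_nat:
  fixes V :: "'b set"
  assumes sg: "simple_graph V E"
  shows "\<exists>(V'::nat set) E' g. simple_graph V' E' \<and> inj_on g V \<and> V' = g ` V
     \<and> (\<forall>u\<in>V. \<forall>v\<in>V. E' (g u) (g v) \<longleftrightarrow> E u v)
     \<and> (\<forall>u\<in>V. \<forall>v\<in>V. gdist E' (g u) (g v) = gdist E u v)
     \<and> (connected_graph V E \<longrightarrow> connected_graph V' E')
     \<and> (distance_exceptional V E \<longrightarrow> distance_exceptional V' E')"
proof -
  have fin: "finite V" using sg unfolding simple_graph_def by blast
  obtain g :: "'b \<Rightarrow> nat" and n where inj: "inj_on g V" using finite_imp_inj_to_nat_seg[OF fin] by blast
  have EV: "E x y \<Longrightarrow> x \<in> V \<and> y \<in> V" for x y using sg unfolding simple_graph_def by blast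
  define E' where "E' = (\<lambda>p q. \<exists>u\<in>V. \<exists>v\<in>V. p = g u \<and> q = g v \<and> E u v)"
  have Eg: "E' (g u) (g v) \<longleftrightarrow> E u v" if "u \<in> V" "v \<in> V" for u v
    using that inj EV unfolding E'_def inj_on_def by blast
  have walk: "(E'^^n) (g u) (g v) \<longleftrightarrow> (E^^n) u v" if "u \<in> V" "v \<in> V" for n u v
  proof
    show "(E^^n) u v \<Longrightarrow> (E'^^n) (g u) (g v)"
      by (rule relpowp_map[of E E' g]) (use EV Eg in blast)
    show "(E'^^n) (g u) (g v) \<Longrightarrow> (E^^n) u v"
      using that
    proof (induction n arbitrary: v)
      case 0 thus ?case using inj by (simp add: inj_on_def)
    next
      case (Suc n)
      then obtain w where w: "(E'^^n) (g u) w" "E' w (g v)" by (auto elim: relpowp_Suc_E)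
      then obtain x y where xy: "x \<in> V" "y \<in> V" "w = g x" "g v = g y" "E x y" unfolding E'_def by blast
      have "y = v" using xy Suc.prems inj by (simp add: inj_on_def)
      then show ?case using Suc.IH[of x] xy w Suc.prems by (meson relpowp_Suc_I)
    qed
  qed
  have gd: "gdist E' (g u) (g v) = gdist E u v" if "u \<in> V" "v \<in> V" for u v
    unfolding gdist_def using walk[OF that] by simp
  have irr: "\<not> E' p p" for p
  proof
    assume "E' p p"
    then obtain u v where "u \<in> V" "v \<in> V" "p = g u" "p = g v" "E u v" unfolding E'_def by blast
    then have "u = v" using inj unfolding inj_on_def by blast
    then show False using \<open>E u v\<close> sg unfolding simple_graph_def by blast
  qed
  have simple: "simple_graph (g ` V) E'"
    unfolding simple_graph_def using fin EV irr simple_sym[OF sg] unfolding E'_def by blast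
  have conn: "connected_graph (g ` V) E'" if c: "connected_graph V E"
  proof -
    have "E'\<^sup>*\<^sup>* (g u) (g v)" if uv: "u \<in> V" "v \<in> V" for u v
    proof -
      obtain n where "(E^^n) u v" using connected_walk[OF c uv] by blast
      then show ?thesis using walk[OF uv] rtranclp_power by metis
    qed
    moreover have "g ` V \<noteq> {}" using c unfolding connected_graph_def by blast
    ultimately show ?thesis unfolding connected_graph_def by blast
  qed
  have exc: "distance_exceptional (g ` V) E'" if d: "distance_exceptional V E"
    unfolding distance_exceptional_def
  proof
    assume "\<exists>x. curvature_potential (g ` V) E' x"
    then obtain x where x: "curvature_potential (g ` V) E' x" by blast
    have "curvature_potential V E (x \<circ> g)"
    proof (rule pot_rowsI)
      fix u assume u: "u \<in> V"
      have "(\<Sum>v\<in>V. real (gdist E u v) * (x \<circ> g) v) = (\<Sum>v\<in>V. real (gdist E' (g u) (g v)) * x (g v))"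
        using gd u by simp
      also have "\<dots> = (\<Sum>w\<in>g ` V. real (gdist E' (g u) w) * x w)"
        by (simp add: sum.reindex[OF inj])
      also have "\<dots> = 1" using pot_rows[OF x] u by blast
      finally show "(\<Sum>v\<in>V. real (gdist E u v) * (x \<circ> g) v) = 1" .
    qed
    then show False using d unfolding distance_exceptional_def by blast
  qed
  show ?thesis
    apply (rule exI[of _ "g ` V"], rule exI[of _ E'], rule exI[of _ g])
    using simple inj Eg gd conn exc by blast
qed

section \<open>One-point union\<close>

definition jmap :: "'a \<Rightarrow> 'b \<Rightarrow> 'b \<Rightarrow> 'a + 'b" where
  "jmap a b v = (if v = b then Inl a else Inr v)"

definition jV :: "'a set \<Rightarrow> 'a \<Rightarrow> 'b set \<Rightarrow> 'b \<Rightarrow> ('a + 'b) set" where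
  "jV VA a VB b = Inl ` VA \<union> jmap a b ` VB"

definition jE :: "('a \<Rightarrow> 'a \<Rightarrow> bool) \<Rightarrow> 'a \<Rightarrow> ('b \<Rightarrow> 'b \<Rightarrow> bool) \<Rightarrow> 'b \<Rightarrow> 'a + 'b \<Rightarrow> 'a + 'b \<Rightarrow> bool" where
  "jE EA a EB b p q = ((\<exists>u v. p = Inl u \<and> q = Inl v \<and> EA u v) \<or> (\<exists>u v. p = jmap a b u \<and> q = jmap a b v \<and> EB u v))"

lemma jmap_inj: "jmap a b u = jmap a b v \<longleftrightarrow> u = v"
  unfolding jmap_def by auto

lemma jmap_b[simp]: "jmap a b b = Inl a"
  unfolding jmap_def by simp

lemma jmap_Inl: "jmap a b v = Inl x \<longleftrightarrow> v = b \<and> x = a"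
  unfolding jmap_def by auto

lemma Inl_jmap: "Inl x = jmap a b v \<longleftrightarrow> v = b \<and> x = a"
  unfolding jmap_def by auto

locale opu =
  fixes VA :: "'a set" and EA a VB and EB :: "'b \<Rightarrow> 'b \<Rightarrow> bool" and b
  assumes sA: "simple_graph VA EA" and cA: "connected_graph VA EA" and aA: "a \<in> VA"
    and sB: "simple_graph VB EB" and cB: "connected_graph VB EB" and bB: "b \<in> VB"
begin

abbreviation "U \<equiv> jV VA a VB b"
abbreviation "F \<equiv> jE EA a EB b"
abbreviation "j \<equiv> jmap a b"
abbreviation "dA \<equiv> gdist EA"
abbreviation "dB \<equiv> gdist EB"

lemma EA_V: "EA x y \<Longrightarrow> x \<in> VA \<and> y \<in> VA" using sA unfolding simple_graph_def by blast
lemma EB_V: "EB x y \<Longrightarrow> x \<in> VB \<and> y \<in> VB" using sB unfolding simple_graph_def by blast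

lemma liftA: "(EA^^n) u v \<Longrightarrow> (F^^n) (Inl u) (Inl v)"
  by (rule relpowp_map) (auto simp: jE_def)
lemma liftB: "(EB^^n) u v \<Longrightarrow> (F^^n) (j u) (j v)"
  by (rule relpowp_map) (auto simp: jE_def)

lemma wA: "u \<in> VA \<Longrightarrow> v \<in> VA \<Longrightarrow> (EA^^(dA u v)) u v"
  using connected_walk[OF cA] gdist_walk by metis
lemma wB: "u \<in> VB \<Longrightarrow> v \<in> VB \<Longrightarrow> (EB^^(dB u v)) u v"
  using connected_walk[OF cB] gdist_walk by metis

lemma lipA: "s \<in> VA \<Longrightarrow> EA p q \<Longrightarrow> dA s q \<le> dA s p + 1"
  using EA_V wA gdist_edge by metis
lemma lipB: "s \<in> VB \<Longrightarrow> EB p q \<Longrightarrow> dB s q \<le> dB s p + 1"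
  using EB_V wB gdist_edge by metis

lemma distA:
  assumes s: "s \<in> VA"
  shows "x \<in> VA \<Longrightarrow> gdist F (Inl s) (Inl x) = dA s x"
    and "y \<in> VB \<Longrightarrow> gdist F (Inl s) (j y) = dA s a + dB b y"
proof -
  define h where "h = (\<lambda>p. case p of Inl x \<Rightarrow> dA s x | Inr y \<Rightarrow> dA s a + dB b y)"
  have hj: "h (j y) = dA s a + dB b y" for y
    unfolding h_def jmap_def by simp
  have lip: "\<forall>p q. F p q \<longrightarrow> h q \<le> h p + 1"
  proof (intro allI impI)
    fix p q assume "F p q"
    then consider (A) u v where "p = Inl u" "q = Inl v" "EA u v" | (B) u v where "p = j u" "q = j v" "EB u v"
      unfolding jE_def by blast
    then show "h q \<le> h p + 1"
    proof cases
      case A thus ?thesis using lipA[OF s] by (simp add: h_def)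
    next
      case B thus ?thesis using lipB[OF bB, of u v] hj by simp
    qed
  qed
  have h0: "h (Inl s) = 0" by (simp add: h_def)
  show "gdist F (Inl s) (Inl x) = dA s x" if x: "x \<in> VA"
    by (rule gdist_eqI[OF liftA[OF wA[OF s x]] lip]) (simp add: h_def)
  assume y: "y \<in> VB"
  have "(F^^(dA s a + dB b y)) (Inl s) (j y)"
    using relpowp_comp[OF liftA[OF wA[OF s aA]] liftB[OF wB[OF bB y], unfolded jmap_b]] by simp
  then show "gdist F (Inl s) (j y) = dA s a + dB b y"
    by (rule gdist_eqI[OF _ lip]) (simp add: h0 hj)
qed

lemma distB:
  assumes s: "s \<in> VB"
  shows "y \<in> VB \<Longrightarrow> gdist F (j s) (j y) = dB s y"
    and "x \<in> VA \<Longrightarrow> gdist F (j s) (Inl x) = dB s b + dA a x"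
proof -
  define h where "h = (\<lambda>p. case p of Inl x \<Rightarrow> dB s b + dA a x | Inr y \<Rightarrow> dB s y)"
  have hj: "h (j y) = dB s y" for y
    unfolding h_def jmap_def by simp
  have lip: "\<forall>p q. F p q \<longrightarrow> h q \<le> h p + 1"
  proof (intro allI impI)
    fix p q assume "F p q"
    then consider (A) u v where "p = Inl u" "q = Inl v" "EA u v" | (B) u v where "p = j u" "q = j v" "EB u v"
      unfolding jE_def by blast
    then show "h q \<le> h p + 1"
    proof cases
      case A thus ?thesis using lipA[OF aA] by (simp add: h_def)
    next
      case B thus ?thesis using lipB[OF s, of u v] hj by simp
    qed
  qed
  have h0: "h (j s) = 0" by (simp add: hj)
  have hI: "h (Inl x) = dB s b + dA a x" for x by (simp add: h_def)
  show "gdist F (j s) (j y) = dB s y" if y: "y \<in> VB"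
    by (rule gdist_eqI[OF liftB[OF wB[OF s y]] lip]) (simp add: h0 hj)
  assume x: "x \<in> VA"
  have "(F^^(dB s b + dA a x)) (j s) (Inl x)"
    using relpowp_comp[OF liftB[OF wB[OF s bB], unfolded jmap_b] liftA[OF wA[OF aA x]]] by simp
  then show "gdist F (j s) (Inl x) = dB s b + dA a x"
    by (rule gdist_eqI[OF _ lip]) (auto simp: h_def jmap_def)
qed

lemma U_simple: "simple_graph U F"
proof -
  have fin: "finite U" using sA sB unfolding simple_graph_def jV_def by blast
  have 1: "\<forall>x y. F x y \<longrightarrow> x \<in> U \<and> y \<in> U" unfolding jE_def jV_def using EA_V EB_V by blast
  have 2: "\<forall>x y. F x y \<longrightarrow> F y x" unfolding jE_def using simple_sym[OF sA] simple_sym[OF sB] by blast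
  have iA: "\<not> EA x x" for x using sA unfolding simple_graph_def by blast
  have iB: "\<not> EB x x" for x using sB unfolding simple_graph_def by blast
  have 3: "\<forall>x. \<not> F x x" unfolding jE_def using iA iB by (auto simp: jmap_inj)
  show ?thesis unfolding simple_graph_def using fin 1 2 3 by blast
qed

lemma U_conn: "connected_graph U F"
proof -
  have r: "\<exists>n. (F^^n) (Inl a) p" if pU: "p \<in> U" for p
  proof -
    consider (A) x where "x \<in> VA" "p = Inl x" | (B) y where "y \<in> VB" "p = j y"
      using pU by (auto simp: jV_def)
    then show ?thesis
    proof cases
      case A thus ?thesis using liftA[OF wA[OF aA A(1)]] by blast
    next
      case B thus ?thesis using liftB[OF wB[OF bB B(1)]] by (metis jmap_b)
    qed
  qed
  have sF: "\<And>x y. F x y \<Longrightarrow> F y x" using simple_sym[OF U_simple] .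
  show ?thesis unfolding connected_graph_def
  proof (intro conjI ballI)
    show "U \<noteq> {}" using aA unfolding jV_def by blast
  next
    fix p q assume "p \<in> U" "q \<in> U"
    then obtain m n where "(F^^m) (Inl a) p" "(F^^n) (Inl a) q" using r by blast
    then have "(F^^m) p (Inl a)" using relpowp_sym[of F m "Inl a" p] sF by blast
    then have "(F^^(m+n)) p q" using \<open>(F^^n) (Inl a) q\<close> by (rule relpowp_comp)
    then show "F\<^sup>*\<^sup>* p q" using rtranclp_power by metis
  qed
qed

lemma U_emb: "induced_embedding VA EA U F Inl"
  unfolding induced_embedding_def jV_def jE_def
  using sB unfolding simple_graph_def by (auto simp: jmap_Inl Inl_jmap)

lemma U_iso: "u \<in> VA \<Longrightarrow> v \<in> VA \<Longrightarrow> gdist F (Inl u) (Inl v) = dA u v"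
  using distA(1) by blast

lemma U_exc:
  assumes xA: "\<And>u. u \<in> VA \<Longrightarrow> (\<Sum>v\<in>VA. real (dA u v) * xA v) = tA" "(\<Sum>v\<in>VA. xA v) = 1"
    and zB: "\<And>u. u \<in> VB \<Longrightarrow> (\<Sum>v\<in>VB. real (dB u v) * zB v) = tB" "(\<Sum>v\<in>VB. zB v) = 1"
    and t: "tA + tB = 0"
  shows "distance_exceptional U F"
proof -
  have finA: "finite VA" and finB: "finite VB" using sA sB unfolding simple_graph_def by blast+
  have finU: "finite U" using finA finB unfolding jV_def by blast
  define yA :: "'a + 'b \<Rightarrow> real" where "yA = (\<lambda>q. case q of Inl x \<Rightarrow> xA x | Inr _ \<Rightarrow> 0)"
  define yB where "yB = (\<lambda>q. case q of Inl x \<Rightarrow> (if x = a then zB b else 0) | Inr y \<Rightarrow> (if y = b then 0 else zB y))"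
  define e where "e = (\<lambda>q::'a + 'b. if q = Inl a then (1::real) else 0)"
  define y where "y = (\<lambda>q. yA q + yB q - e q)"
  have SA: "(\<Sum>q\<in>U. f q * yA q) = (\<Sum>x\<in>VA. f (Inl x) * xA x)" for f
  proof -
    have "(\<Sum>q\<in>U. f q * yA q) = (\<Sum>q\<in>Inl ` VA. f q * yA q)"
      by (rule sum.mono_neutral_right[OF finU]) (use aA in \<open>auto simp: jV_def yA_def jmap_def\<close>)
    also have "\<dots> = (\<Sum>x\<in>VA. f (Inl x) * xA x)" by (simp add: sum.reindex yA_def)
    finally show ?thesis .
  qed
  have injj: "inj_on j VB" by (meson inj_onI jmap_inj)
  have SB: "(\<Sum>q\<in>U. f q * yB q) = (\<Sum>x\<in>VB. f (j x) * zB x)" for f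
  proof -
    have "(\<Sum>q\<in>U. f q * yB q) = (\<Sum>q\<in>j ` VB. f q * yB q)"
    proof (rule sum.mono_neutral_right[OF finU])
      show "j ` VB \<subseteq> U" unfolding jV_def by blast
      show "\<forall>i\<in>U - j ` VB. f i * yB i = 0"
      proof
        fix i assume "i \<in> U - j ` VB"
        then have iU: "i \<in> Inl ` VA" and ij: "i \<notin> j ` VB" unfolding jV_def by blast+
        then obtain x where ix: "i = Inl x" by blast
        have "Inl a \<in> j ` VB" using bB jmap_b by (metis image_eqI)
        then have "x \<noteq> a" using ij ix by blast
        note ix this
        then show "f i * yB i = 0" by (simp add: yB_def)
      qed
    qed
    also have "\<dots> = (\<Sum>x\<in>VB. f (j x) * yB (j x))" by (simp add: sum.reindex[OF injj])
    also have "\<dots> = (\<Sum>x\<in>VB. f (j x) * zB x)" by (rule sum.cong) (auto simp: yB_def jmap_def)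
    finally show ?thesis .
  qed
  have aU: "Inl a \<in> U" using aA unfolding jV_def by blast
  have SE: "(\<Sum>q\<in>U. f q * e q) = f (Inl a)" for f
  proof -
    have "(\<Sum>q\<in>U. f q * e q) = (\<Sum>q\<in>U. if q = Inl a then f q else 0)"
      by (rule sum.cong) (auto simp: e_def)
    also have "\<dots> = f (Inl a)" using finU aU by (simp add: sum.delta)
    finally show ?thesis .
  qed
  have Sy: "(\<Sum>q\<in>U. f q * y q) = (\<Sum>x\<in>VA. f (Inl x) * xA x) + (\<Sum>x\<in>VB. f (j x) * zB x) - f (Inl a)" for f
  proof -
    have "(\<Sum>q\<in>U. f q * y q) = (\<Sum>q\<in>U. f q * yA q) + (\<Sum>q\<in>U. f q * yB q) - (\<Sum>q\<in>U. f q * e q)"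
      by (simp add: y_def algebra_simps sum.distrib sum_subtractf)
    then show ?thesis using SA SB SE by simp
  qed
  show ?thesis
  proof (rule exc_from_kernel[OF U_simple])
    show "(\<Sum>v\<in>U. y v) \<noteq> 0" using Sy[of "\<lambda>_. 1"] xA(2) zB(2) by simp
  next
    fix p assume "p \<in> U"
    then consider (A) s where "s \<in> VA" "p = Inl s" | (B) s where "s \<in> VB" "p = j s" unfolding jV_def by blast
    then show "(\<Sum>v\<in>U. real (gdist F p v) * y v) = 0"
    proof cases
      case A
      have "(\<Sum>v\<in>U. real (gdist F p v) * y v)
          = (\<Sum>x\<in>VA. real (dA s x) * xA x) + (\<Sum>x\<in>VB. (real (dA s a) + real (dB b x)) * zB x) - real (dA s a)"
        using Sy[of "\<lambda>q. real (gdist F p q)"] A distA[OF A(1)] aA by simp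
      also have "\<dots> = tA + (real (dA s a) * (\<Sum>x\<in>VB. zB x) + (\<Sum>x\<in>VB. real (dB b x) * zB x)) - real (dA s a)"
        using xA(1)[OF A(1)] by (simp add: algebra_simps sum.distrib sum_distrib_left sum_distrib_right)
      also have "\<dots> = 0" using zB bB t by simp
      finally show ?thesis .
    next
      case B
      have "(\<Sum>v\<in>U. real (gdist F p v) * y v)
          = (\<Sum>x\<in>VA. (real (dB s b) + real (dA a x)) * xA x) + (\<Sum>x\<in>VB. real (dB s x) * zB x) - real (dB s b)"
        using Sy[of "\<lambda>q. real (gdist F p q)"] B distB[OF B(1)] aA by simp
      also have "\<dots> = (real (dB s b) * (\<Sum>x\<in>VA. xA x) + (\<Sum>x\<in>VA. real (dA a x) * xA x)) + tB - real (dB s b)"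
        using zB(1)[OF B(1)] by (simp add: algebra_simps sum.distrib sum_distrib_left sum_distrib_right)
      also have "\<dots> = 0" using xA aA t by simp
      finally show ?thesis .
    qed
  qed
qed

end



lemma sum_pt:
  assumes "finite A" "i0 \<in> A"
  shows "(\<Sum>i\<in>A. if i = i0 then x else c) = c * (real (card A) - 1) + (x::real)"
proof -
  have "(\<Sum>i\<in>A. if i = i0 then x else c) = x + (\<Sum>i\<in>A - {i0}. if i = i0 then x else c)"
    using sum.remove[OF assms, of "\<lambda>i. if i = i0 then x else c"] by simp
  also have "(\<Sum>i\<in>A - {i0}. if i = i0 then x else c) = (\<Sum>i\<in>A - {i0}. c)"
    by (rule sum.cong) auto
  also have "\<dots> = c * (real (card A) - 1)"
  proof -
    have "card A > 0" using assms card_gt_0_iff by blast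
    then have "card A \<ge> 1" by simp
    then show ?thesis using assms by (simp add: of_nat_diff)
  qed
  finally show ?thesis by simp
qed

section \<open>Block graphs: complete multipartite graphs\<close>

definition bV :: "nat \<Rightarrow> nat \<Rightarrow> nat \<Rightarrow> (nat + nat \<times> nat) set" where
  "bV b k m = Inl ` {..<b} \<union> Inr ` ({..<k} \<times> {..<m})"

definition samepart :: "nat + nat \<times> nat \<Rightarrow> nat + nat \<times> nat \<Rightarrow> bool" where
  "samepart p q = (case p of Inr x \<Rightarrow> (case q of Inr y \<Rightarrow> fst x = fst y | Inl _ \<Rightarrow> False) | Inl _ \<Rightarrow> False)"

definition bE :: "nat \<Rightarrow> nat \<Rightarrow> nat \<Rightarrow> nat + nat \<times> nat \<Rightarrow> nat + nat \<times> nat \<Rightarrow> bool" where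
  "bE b k m p q = (p \<in> bV b k m \<and> q \<in> bV b k m \<and> p \<noteq> q \<and> \<not> samepart p q)"

definition bd :: "nat + nat \<times> nat \<Rightarrow> nat + nat \<times> nat \<Rightarrow> nat" where
  "bd p q = (if p = q then 0 else if samepart p q then 2 else 1)"

lemma samepart_sym: "samepart p q = samepart q p"
  unfolding samepart_def by (auto split: sum.splits)

lemma block_mid:
  assumes "b \<ge> 1 \<or> k \<ge> 2" "p \<in> bV b k m" "q \<in> bV b k m" "samepart p q"
  shows "\<exists>w. bE b k m p w \<and> bE b k m w q"
proof -
  obtain i j j' where pq: "p = Inr (i,j)" "q = Inr (i,j')" "i < k" "j < m" "j' < m"
    using assms(2-4) unfolding bV_def samepart_def by (auto split: sum.splits)
  define w :: "nat + nat \<times> nat" where "w = (if b \<ge> 1 then Inl 0 else Inr (if i = 0 then 1 else 0, 0))"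
  have "w \<in> bV b k m" using assms(1) pq unfolding w_def bV_def by auto
  moreover have "\<not> samepart p w" "\<not> samepart w q" "p \<noteq> w" "w \<noteq> q"
    using pq unfolding w_def samepart_def by auto
  ultimately show ?thesis using assms(2,3) unfolding bE_def by blast
qed

lemma block_dist:
  assumes "b \<ge> 1 \<or> k \<ge> 2" "p \<in> bV b k m" "q \<in> bV b k m"
  shows "gdist (bE b k m) p q = bd p q"
proof (cases "p = q")
  case True thus ?thesis by (simp add: bd_def)
next
  case False
  show ?thesis
  proof (cases "samepart p q")
    case True
    then obtain w where "bE b k m p w" "bE b k m w q" using block_mid assms by blast
    moreover have "\<not> bE b k m p q" using True unfolding bE_def by blast
    ultimately show ?thesis using gdist_two False True by (simp add: bd_def)
  next
    case F: False
    then have "bE b k m p q" using assms False unfolding bE_def by blast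
    then show ?thesis using gdist_one False F by (simp add: bd_def)
  qed
qed

lemma block_simple: "simple_graph (bV b k m) (bE b k m)"
  unfolding simple_graph_def bE_def bV_def using samepart_sym by auto

lemma block_conn:
  assumes "b \<ge> 1 \<or> k \<ge> 2" "k \<ge> 1" "m \<ge> 1"
  shows "connected_graph (bV b k m) (bE b k m)"
  unfolding connected_graph_def
proof (intro conjI ballI)
  have "Inr (0,0) \<in> bV b k m" using assms unfolding bV_def by auto
  then show "bV b k m \<noteq> {}" by blast
next
  fix p q assume pq: "p \<in> bV b k m" "q \<in> bV b k m"
  show "(bE b k m)\<^sup>*\<^sup>* p q"
  proof (cases "p = q")
    case True thus ?thesis by simp
  next
    case False
    show ?thesis
    proof (cases "samepart p q")
      case True
      then obtain w where "bE b k m p w" "bE b k m w q" using block_mid assms pq by blast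
      then show ?thesis by (meson rtranclp.simps r_into_rtranclp)
    next
      case F: False
      then have "bE b k m p q" using pq False unfolding bE_def by blast
      then show ?thesis by blast
    qed
  qed
qed

lemma block_vec:
  assumes c: "b \<ge> 1 \<or> k \<ge> 2" "k \<ge> 1" "m \<ge> 1"
    and S: "real b * \<alpha> + real k * real m * \<beta> = 1"
    and R1: "(real b - 1) * \<alpha> + real k * real m * \<beta> = r"
    and R2: "real b * \<alpha> + ((real k - 1) * real m + 2 * (real m - 1)) * \<beta> = r"
  shows "\<exists>z. (\<Sum>v\<in>bV b k m. z v) = 1 \<and> (\<forall>u\<in>bV b k m. (\<Sum>v\<in>bV b k m. real (gdist (bE b k m) u v) * z v) = r)"
proof -
  define z where "z = (\<lambda>p::nat + nat \<times> nat. case p of Inl _ \<Rightarrow> \<alpha> | Inr _ \<Rightarrow> \<beta>)"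
  have split: "(\<Sum>v\<in>bV b k m. f v) = (\<Sum>i<b. f (Inl i)) + (\<Sum>x\<in>{..<k} \<times> {..<m}. f (Inr x))" for f :: "_ \<Rightarrow> real"
    unfolding bV_def by (subst sum.union_disjoint) (auto simp: sum.reindex)
  have prod: "(\<Sum>x\<in>{..<k} \<times> {..<m}. g x) = (\<Sum>i<k. \<Sum>j<m. g (i,j))" for g :: "_ \<Rightarrow> real"
    by (simp add: sum.cartesian_product)
  have sz: "(\<Sum>v\<in>bV b k m. z v) = 1"
    unfolding split prod using S by (simp add: z_def)
  have rows: "(\<Sum>v\<in>bV b k m. real (gdist (bE b k m) u v) * z v) = r" if u: "u \<in> bV b k m" for u
  proof -
    have "(\<Sum>v\<in>bV b k m. real (gdist (bE b k m) u v) * z v) = (\<Sum>v\<in>bV b k m. real (bd u v) * z v)"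
      by (rule sum.cong) (use block_dist[OF c(1) u] in auto)
    also have "\<dots> = r"
    proof (cases u)
      case (Inl i0)
      then have i0: "i0 < b" using u unfolding bV_def by auto
      have "(\<Sum>i<b. real (bd u (Inl i)) * z (Inl i)) = (\<Sum>i<b. if i = i0 then 0 else \<alpha>)"
        by (rule sum.cong) (auto simp: Inl bd_def samepart_def z_def)
      also have "\<dots> = \<alpha> * (real b - 1)" using sum_pt[of "{..<b}" i0 0 \<alpha>] i0 by simp
      finally have A: "(\<Sum>i<b. real (bd u (Inl i)) * z (Inl i)) = \<alpha> * (real b - 1)" .
      have B: "(\<Sum>i<k. \<Sum>j<m. real (bd u (Inr (i,j))) * z (Inr (i,j))) = real k * real m * \<beta>"
        by (simp add: Inl bd_def samepart_def z_def)
      show ?thesis unfolding split prod using A B R1 by (simp add: algebra_simps)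
    next
      case (Inr x)
      obtain i0 j0 where x: "x = (i0, j0)" by force
      then have ij: "i0 < k" "j0 < m" using u Inr unfolding bV_def by auto
      have A: "(\<Sum>i<b. real (bd u (Inl i)) * z (Inl i)) = real b * \<alpha>"
        by (simp add: Inr bd_def samepart_def z_def)
      have inner: "(\<Sum>j<m. real (bd u (Inr (i,j))) * z (Inr (i,j)))
          = (if i = i0 then 2 * \<beta> * (real m - 1) else real m * \<beta>)" for i
      proof (cases "i = i0")
        case True
        have "(\<Sum>j<m. real (bd u (Inr (i,j))) * z (Inr (i,j))) = (\<Sum>j<m. if j = j0 then 0 else 2 * \<beta>)"
          by (rule sum.cong) (auto simp: Inr x True bd_def samepart_def z_def)
        also have "\<dots> = 2 * \<beta> * (real m - 1)" using sum_pt[of "{..<m}" j0 0 "2*\<beta>"] ij by simp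
        finally show ?thesis using True by simp
      next
        case False
        then show ?thesis by (simp add: Inr x bd_def samepart_def z_def)
      qed
      have B: "(\<Sum>i<k. \<Sum>j<m. real (bd u (Inr (i,j))) * z (Inr (i,j)))
           = real m * \<beta> * (real k - 1) + 2 * \<beta> * (real m - 1)"
        unfolding inner using sum_pt[of "{..<k}" i0 "2 * \<beta> * (real m - 1)" "real m * \<beta>"] ij by simp
      show ?thesis unfolding split prod using A B R2 by (simp add: algebra_simps)
    qed
    finally show ?thesis .
  qed
  show ?thesis using sz rows by blast
qed

lemma block_exists:
  assumes r: "r \<in> \<rat>"
  shows "\<exists>b k m \<alpha> \<beta>. (b \<ge> 1 \<or> k \<ge> 2) \<and> k \<ge> 1 \<and> m \<ge> 1
      \<and> real b * \<alpha> + real k * real m * \<beta> = 1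
      \<and> (real b - 1) * \<alpha> + real k * real m * \<beta> = r
      \<and> real b * \<alpha> + ((real k - 1) * real m + 2 * (real m - 1)) * \<beta> = r"
proof (cases "r = 1")
  case True
  show ?thesis
    by (rule exI[of _ 0], rule exI[of _ 2], rule exI[of _ 2], rule exI[of _ 0], rule exI[of _ "1/4"])
       (simp add: True)
next
  case False
  define \<rho> where "\<rho> = r - 1"
  have \<rho>0: "\<rho> \<noteq> 0" using False by (simp add: \<rho>_def)
  have "1 / \<rho> \<in> \<rat>" using r unfolding \<rho>_def by simp
  then obtain p q :: int where q: "q > 0" and pq: "1 / \<rho> = of_int p / of_int q"
    by (rule Rats_cases') blast
  define L where "L = \<bar>p\<bar> + 1"
  define kk where "kk = p + q * L"
  define bb where "bb = p + (q + 1) * L"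
  have L1: "L \<ge> 1" unfolding L_def by simp
  have qL: "q * L \<ge> L" using mult_right_mono[of 1 q L] q L1 by simp
  have pL: "p + L \<ge> 1" unfolding L_def by simp
  have kk1: "kk \<ge> 1" unfolding kk_def using qL pL by linarith
  have "bb = p + q * L + L" unfolding bb_def by (simp add: algebra_simps)
  then have bb1: "bb \<ge> 1" using qL pL L1 by linarith
  have key: "kk * (q + 1) - bb * q = p" unfolding kk_def bb_def by (simp add: algebra_simps)
  have keyR: "real_of_int kk * (of_int q + 1) - real_of_int bb * of_int q = of_int p"
    using arg_cong[OF key, of real_of_int] by simp
  have \<rho>p: "\<rho> * of_int p = of_int q" using pq \<rho>0 q by (simp add: field_simps)
  define b where "b = nat bb"
  define k where "k = nat kk"
  define m where "m = nat (2 * q + 2)"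
  have rb: "real b = of_int bb" using bb1 by (simp add: b_def)
  have rk: "real k = of_int kk" using kk1 by (simp add: k_def)
  have rm: "real m = 2 * of_int q + 2" using q by (simp add: m_def)
  define \<alpha> where "\<alpha> = - \<rho>"
  define \<beta> where "\<beta> = \<rho> / (2 * of_int q)"
  have qR: "real_of_int q > 0" using q by simp
  have S: "real b * \<alpha> + real k * real m * \<beta> = 1"
  proof -
    have "real b * \<alpha> + real k * real m * \<beta> = \<rho> * (real_of_int kk * (of_int q + 1) - real_of_int bb * of_int q) / of_int q"
      unfolding rb rk rm \<alpha>_def \<beta>_def using qR by (simp add: field_simps)
    also have "\<dots> = 1" unfolding keyR using \<rho>p qR by simp
    finally show ?thesis .
  qed
  have R1: "(real b - 1) * \<alpha> + real k * real m * \<beta> = r"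
    using S unfolding \<alpha>_def \<rho>_def by (simp add: algebra_simps)
  have R2: "real b * \<alpha> + ((real k - 1) * real m + 2 * (real m - 1)) * \<beta> = r"
  proof -
    have "real b * \<alpha> + ((real k - 1) * real m + 2 * (real m - 1)) * \<beta>
        = (real b * \<alpha> + real k * real m * \<beta>) + (real m - 2) * \<beta>" by (simp add: algebra_simps)
    also have "(real m - 2) * \<beta> = \<rho>" unfolding rm \<beta>_def using qR by (simp add: field_simps)
    finally show ?thesis using S unfolding \<rho>_def by simp
  qed
  have "b \<ge> 1" "k \<ge> 1" "m \<ge> 1" using bb1 kk1 q by (simp_all add: b_def k_def m_def)
  then show ?thesis using S R1 R2 by blast
qed



lemma mainlem:
  fixes V :: "'a set" and E :: "'a \<Rightarrow> 'a \<Rightarrow> bool"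
  assumes sg: "simple_graph V E" and cg: "connected_graph V E"
    and H: "distance_exceptional V E \<or> (\<exists>x. curvature_potential V E x \<and> (\<Sum>v\<in>V. x v) \<noteq> 0)"
  shows "\<exists>(V'' :: nat set) E'' f. simple_graph V'' E'' \<and> connected_graph V'' E''
             \<and> distance_exceptional V'' E'' \<and> induced_embedding V E V'' E'' f
             \<and> (\<forall>u\<in>V. \<forall>v\<in>V. gdist E'' (f u) (f v) = gdist E u v)"
  using H
proof
  assume ex: "distance_exceptional V E"
  obtain V' :: "nat set" and E' g where t: "simple_graph V' E'" "inj_on g V" "V' = g ` V"
     "\<forall>u\<in>V. \<forall>v\<in>V. E' (g u) (g v) \<longleftrightarrow> E u v" "\<forall>u\<in>V. \<forall>v\<in>V. gdist E' (g u) (g v) = gdist E u v"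
     "connected_graph V E \<longrightarrow> connected_graph V' E'" "distance_exceptional V E \<longrightarrow> distance_exceptional V' E'"
    using transfer_nat[OF sg] by blast
  have "induced_embedding V E V' E' g" unfolding induced_embedding_def using t by blast
  then show ?thesis using t cg ex by blast
next
  assume "\<exists>x. curvature_potential V E x \<and> (\<Sum>v\<in>V. x v) \<noteq> 0"
  then obtain x where x: "curvature_potential V E x" and s0: "(\<Sum>v\<in>V. x v) \<noteq> 0" by blast
  define s where "s = (\<Sum>v\<in>V. x v)"
  have sQ: "s \<in> \<rat>" unfolding s_def by (rule pot_sum_rat[OF sg x])
  define t where "t = 1 / s"
  define xA where "xA = (\<lambda>v. x v / s)"
  have xA1: "(\<Sum>v\<in>V. real (gdist E u v) * xA v) = t" if "u \<in> V" for u
  proof -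
    have "(\<Sum>v\<in>V. real (gdist E u v) * xA v) = (\<Sum>v\<in>V. real (gdist E u v) * x v) / s"
      unfolding xA_def by (simp add: sum_divide_distrib)
    then show ?thesis using pot_rows[OF x that] t_def by simp
  qed
  have xA2: "(\<Sum>v\<in>V. xA v) = 1" unfolding xA_def using s0 s_def by (simp add: sum_divide_distrib[symmetric])
  have rQ: "- t \<in> \<rat>" unfolding t_def using sQ by simp
  obtain b k m \<alpha> \<beta> where bk: "b \<ge> 1 \<or> k \<ge> 2" "k \<ge> 1" "m \<ge> 1"
     "real b * \<alpha> + real k * real m * \<beta> = 1"
     "(real b - 1) * \<alpha> + real k * real m * \<beta> = - t"
     "real b * \<alpha> + ((real k - 1) * real m + 2 * (real m - 1)) * \<beta> = - t"
    using block_exists[OF rQ] by blast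
  obtain z where z: "(\<Sum>v\<in>bV b k m. z v) = 1"
     "\<forall>u\<in>bV b k m. (\<Sum>v\<in>bV b k m. real (gdist (bE b k m) u v) * z v) = - t"
    using block_vec[OF bk] by blast
  obtain a where a: "a \<in> V" using cg unfolding connected_graph_def by blast
  have r0: "Inr (0,0) \<in> bV b k m" using bk unfolding bV_def by auto
  interpret opu V E a "bV b k m" "bE b k m" "Inr (0,0)"
    by unfold_locales (use sg cg a block_simple block_conn[OF bk(1-3)] r0 in auto)
  have exc: "distance_exceptional U F"
    by (rule U_exc[of xA t z "- t"]) (use xA1 xA2 z in auto)
  obtain V' :: "nat set" and E' g where tr: "simple_graph V' E'" "inj_on g U" "V' = g ` U"
     "\<forall>u\<in>U. \<forall>v\<in>U. E' (g u) (g v) \<longleftrightarrow> F u v" "\<forall>u\<in>U. \<forall>v\<in>U. gdist E' (g u) (g v) = gdist F u v"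
     "connected_graph U F \<longrightarrow> connected_graph V' E'" "distance_exceptional U F \<longrightarrow> distance_exceptional V' E'"
    using transfer_nat[OF U_simple] by blast
  have emb: "induced_embedding V E U F Inl" by (rule U_emb)
  then have sub: "Inl ` V \<subseteq> U" unfolding induced_embedding_def by blast
  have "induced_embedding V E V' E' (g \<circ> Inl)"
    unfolding induced_embedding_def
  proof (intro conjI)
    show "inj_on (g \<circ> Inl) V" using tr(2) sub by (meson comp_inj_on inj_Inl inj_on_subset subset_UNIV)
    show "(g \<circ> Inl) ` V \<subseteq> V'" using tr(3) sub by auto
    show "\<forall>u\<in>V. \<forall>v\<in>V. E' ((g \<circ> Inl) u) ((g \<circ> Inl) v) = E u v"
    proof (intro ballI)
      fix u v assume uv: "u \<in> V" "v \<in> V"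
      then have "Inl u \<in> U" "Inl v \<in> U" using sub by auto
      then have "E' (g (Inl u)) (g (Inl v)) = F (Inl u) (Inl v)" using tr(4) by blast
      also have "\<dots> = E u v" using emb uv unfolding induced_embedding_def by blast
      finally show "E' ((g \<circ> Inl) u) ((g \<circ> Inl) v) = E u v" by simp
    qed
  qed
  moreover have "\<forall>u\<in>V. \<forall>v\<in>V. gdist E' ((g \<circ> Inl) u) ((g \<circ> Inl) v) = gdist E u v"
  proof (intro ballI)
    fix u v assume uv: "u \<in> V" "v \<in> V"
    then have "Inl u \<in> U" "Inl v \<in> U" using sub by auto
    then have "gdist E' (g (Inl u)) (g (Inl v)) = gdist F (Inl u) (Inl v)" using tr(5) by blast
    also have "\<dots> = gdist E u v" using U_iso uv by blast
    finally show "gdist E' ((g \<circ> Inl) u) ((g \<circ> Inl) v) = gdist E u v" by simp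
  qed
  ultimately show ?thesis using tr(1,6,7) U_conn exc by blast
qed

section \<open>Apex graphs\<close>

definition aV :: "'a set \<Rightarrow> nat \<Rightarrow> ('a + nat) set" where
  "aV V k = Inl ` V \<union> Inr ` {..<k}"

definition aE :: "('a \<Rightarrow> 'a \<Rightarrow> bool) \<Rightarrow> 'a set \<Rightarrow> nat \<Rightarrow> 'a + nat \<Rightarrow> 'a + nat \<Rightarrow> bool" where
  "aE E V k p q = (case p of
      Inl u \<Rightarrow> (case q of Inl v \<Rightarrow> E u v | Inr j \<Rightarrow> u \<in> V \<and> j < k)
    | Inr i \<Rightarrow> (case q of Inl v \<Rightarrow> v \<in> V \<and> i < k | Inr j \<Rightarrow> i < k \<and> j < k \<and> i \<noteq> j))"

definition Bd :: "('a \<Rightarrow> 'a \<Rightarrow> bool) \<Rightarrow> 'a \<Rightarrow> 'a \<Rightarrow> real" where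
  "Bd E u v = (if u = v then 0 else if E u v then 1 else 2)"

context
  fixes V :: "'a set" and E k
  assumes sg: "simple_graph V E" and k1: "k \<ge> (1::nat)"
begin

lemma EV: "E x y \<Longrightarrow> x \<in> V \<and> y \<in> V" using sg unfolding simple_graph_def by blast
lemma Eirr: "\<not> E x x" using sg unfolding simple_graph_def by blast

lemma apex_simple: "simple_graph (aV V k) (aE E V k)"
proof -
  have fin: "finite (aV V k)" using sg unfolding simple_graph_def aV_def by blast
  have 1: "\<forall>x y. aE E V k x y \<longrightarrow> x \<in> aV V k \<and> y \<in> aV V k"
    unfolding aE_def aV_def using EV by (auto split: sum.splits)
  have 2: "\<forall>x y. aE E V k x y \<longrightarrow> aE E V k y x"
    unfolding aE_def using simple_sym[OF sg] by (auto split: sum.splits)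
  have 3: "\<forall>x. \<not> aE E V k x x" unfolding aE_def using Eirr by (auto split: sum.splits)
  show ?thesis unfolding simple_graph_def using fin 1 2 3 by blast
qed

lemma apex_adj0: "p \<in> aV V k \<Longrightarrow> p \<noteq> Inr 0 \<Longrightarrow> aE E V k p (Inr 0) \<and> aE E V k (Inr 0) p"
  unfolding aV_def aE_def using k1 by auto

lemma apex_conn: "connected_graph (aV V k) (aE E V k)"
  unfolding connected_graph_def
proof (intro conjI ballI)
  have "Inr 0 \<in> aV V k" using k1 unfolding aV_def by auto
  then show "aV V k \<noteq> {}" by blast
next
  fix p q assume pq: "p \<in> aV V k" "q \<in> aV V k"
  have "(aE E V k)\<^sup>*\<^sup>* p (Inr 0)"
    using apex_adj0[OF pq(1)] by (cases "p = Inr 0") auto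
  moreover have "(aE E V k)\<^sup>*\<^sup>* (Inr 0) q"
    using apex_adj0[OF pq(2)] by (cases "q = Inr 0") auto
  ultimately show "(aE E V k)\<^sup>*\<^sup>* p q" by (rule rtranclp_trans)
qed

lemma apex_emb: "induced_embedding V E (aV V k) (aE E V k) Inl"
  unfolding induced_embedding_def aV_def aE_def by auto

lemma apex_d1: "u \<in> V \<Longrightarrow> v \<in> V \<Longrightarrow> gdist (aE E V k) (Inl u) (Inl v) = Bd E u v"
proof -
  assume uv: "u \<in> V" "v \<in> V"
  show ?thesis
  proof (cases "u = v")
    case True thus ?thesis by (simp add: Bd_def)
  next
    case False
    show ?thesis
    proof (cases "E u v")
      case True
      then have "aE E V k (Inl u) (Inl v)" by (simp add: aE_def)
      then have "gdist (aE E V k) (Inl u) (Inl v) = 1" by (rule gdist_one) (use False in simp)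
      then show ?thesis using False True by (simp add: Bd_def)
    next
      case nE: False
      have e1: "aE E V k (Inl u) (Inr 0)" using uv k1 by (simp add: aE_def)
      have e2: "aE E V k (Inr 0) (Inl v)" using uv k1 by (simp add: aE_def)
      have e3: "\<not> aE E V k (Inl u) (Inl v)" using nE by (simp add: aE_def)
      have ne: "Inl u \<noteq> (Inl v :: 'a + nat)" using False by simp
      have "gdist (aE E V k) (Inl u) (Inl v) = 2" by (rule gdist_two[OF e1 e2 ne e3])
      then show ?thesis using False nE by (simp add: Bd_def)
    qed
  qed
qed

lemma apex_d2: "v \<in> V \<Longrightarrow> i < k \<Longrightarrow> gdist (aE E V k) (Inr i) (Inl v) = 1"
  by (rule gdist_one) (auto simp: aE_def)

lemma apex_d3: "i < k \<Longrightarrow> j < k \<Longrightarrow> gdist (aE E V k) (Inr i) (Inr j) = (if i = j then 0 else 1)"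
proof -
  assume ij: "i < k" "j < k"
  show ?thesis
  proof (cases "i = j")
    case True thus ?thesis by simp
  next
    case False
    have "gdist (aE E V k) (Inr i) (Inr j) = 1" by (rule gdist_one) (use ij False in \<open>auto simp: aE_def\<close>)
    then show ?thesis using False by simp
  qed
qed

lemma apex_split: "(\<Sum>p\<in>aV V k. f p) = (\<Sum>u\<in>V. f (Inl u)) + (\<Sum>i<k. f (Inr i))"
proof -
  have fin: "finite V" using sg unfolding simple_graph_def by blast
  show ?thesis unfolding aV_def using fin by (subst sum.union_disjoint) (auto simp: sum.reindex)
qed

lemma apex_pot:
  assumes x: "curvature_potential (aV V k) (aE E V k) x" and s0: "(\<Sum>p\<in>aV V k. x p) = 0"
  shows "(\<Sum>u\<in>V. x (Inl u)) = real k"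
    and "\<And>v. v \<in> V \<Longrightarrow> (\<Sum>u\<in>V. Bd E v u * x (Inl u)) = 1 + real k"
proof -
  define s where "s = (\<Sum>u\<in>V. x (Inl u))"
  define C where "C = (\<Sum>i<k. x (Inr i))"
  have tot: "s + C = 0" using s0 unfolding apex_split s_def C_def .
  have rowI: "x (Inr i) = s + C - 1" if i: "i < k" for i
  proof -
    have iA: "Inr i \<in> aV V k" using i unfolding aV_def by auto
    have "1 = (\<Sum>p\<in>aV V k. real (gdist (aE E V k) (Inr i) p) * x p)" using pot_rows[OF x iA] by simp
    also have "\<dots> = (\<Sum>u\<in>V. x (Inl u)) + (\<Sum>j<k. (if j = i then 0 else 1) * x (Inr j))"
    proof -
      have "(\<Sum>u\<in>V. real (gdist (aE E V k) (Inr i) (Inl u)) * x (Inl u)) = (\<Sum>u\<in>V. x (Inl u))"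
        by (rule sum.cong) (auto simp: apex_d2 i)
      moreover have "(\<Sum>j<k. real (gdist (aE E V k) (Inr i) (Inr j)) * x (Inr j)) = (\<Sum>j<k. (if j = i then 0 else 1) * x (Inr j))"
        by (rule sum.cong) (auto simp: apex_d3 i)
      ultimately show ?thesis unfolding apex_split by simp
    qed
    also have "(\<Sum>j<k. (if j = i then 0 else 1) * x (Inr j)) = C - x (Inr i)"
    proof -
      have "(\<Sum>j<k. (if j = i then 0 else 1) * x (Inr j)) = (\<Sum>j<k. x (Inr j) - (if j = i then x (Inr j) else 0))"
        by (rule sum.cong) auto
      also have "\<dots> = C - x (Inr i)" using i by (simp add: sum_subtractf C_def sum.delta)
      finally show ?thesis .
    qed
    finally show ?thesis unfolding s_def by simp
  qed
  have "(\<Sum>i<k. x (Inr i)) = (\<Sum>i<k. s + C - 1)" by (rule sum.cong) (auto simp: rowI)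
  then have "C = (\<Sum>i<k. s + C - 1)" unfolding C_def .
  then have "C = real k * (s + C - 1)" by simp
  then have Ck: "C = - real k" using tot by simp
  then show "(\<Sum>u\<in>V. x (Inl u)) = real k" using tot s_def by simp
  fix v assume v: "v \<in> V"
  have vA: "Inl v \<in> aV V k" using v unfolding aV_def by auto
  have "1 = (\<Sum>p\<in>aV V k. real (gdist (aE E V k) (Inl v) p) * x p)" using pot_rows[OF x vA] by simp
  also have "\<dots> = (\<Sum>u\<in>V. Bd E v u * x (Inl u)) + C"
  proof -
    have "(\<Sum>u\<in>V. real (gdist (aE E V k) (Inl v) (Inl u)) * x (Inl u)) = (\<Sum>u\<in>V. Bd E v u * x (Inl u))"
      by (rule sum.cong) (auto simp: apex_d1 v Bd_def)
    moreover have "(\<Sum>i<k. real (gdist (aE E V k) (Inl v) (Inr i)) * x (Inr i)) = C"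
    proof -
      have "\<And>i. i < k \<Longrightarrow> gdist (aE E V k) (Inl v) (Inr i) = 1"
      proof -
        fix i assume i: "i < k"
        have "gdist (aE E V k) (Inl v) (Inr i) = gdist (aE E V k) (Inr i) (Inl v)"
          by (rule gdist_sym) (rule simple_sym[OF apex_simple])
        then show "gdist (aE E V k) (Inl v) (Inr i) = 1" using apex_d2[OF v i] by simp
      qed
      then show ?thesis unfolding C_def by simp
    qed
    ultimately show ?thesis unfolding apex_split by simp
  qed
  finally show "(\<Sum>u\<in>V. Bd E v u * x (Inl u)) = 1 + real k" using Ck by simp
qed

end

lemma apex_good:
  fixes V :: "'a set"
  assumes sg: "simple_graph V E"
  shows "\<exists>k\<ge>1. distance_exceptional (aV V k) (aE E V k)
      \<or> (\<exists>x. curvature_potential (aV V k) (aE E V k) x \<and> (\<Sum>v\<in>aV V k. x v) \<noteq> 0)"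
proof (rule ccontr)
  assume "\<not> ?thesis"
  then have bad: "\<And>k. k \<ge> 1 \<Longrightarrow> \<exists>x. curvature_potential (aV V k) (aE E V k) x \<and> (\<Sum>v\<in>aV V k. x v) = 0"
    unfolding distance_exceptional_def by blast
  obtain x1 where x1: "curvature_potential (aV V 1) (aE E V 1) x1" "(\<Sum>v\<in>aV V 1. x1 v) = 0"
    using bad[of 1] by auto
  obtain x2 where x2: "curvature_potential (aV V 2) (aE E V 2) x2" "(\<Sum>v\<in>aV V 2. x2 v) = 0"
    using bad[of 2] by auto
  define a where "a = (\<lambda>u. x1 (Inl u))"
  define c where "c = (\<lambda>u. x2 (Inl u))"
  have a1: "(\<Sum>u\<in>V. a u) = 1" and a2: "\<And>v. v \<in> V \<Longrightarrow> (\<Sum>u\<in>V. Bd E v u * a u) = 2"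
    using apex_pot[OF sg _ x1] unfolding a_def by auto
  have c1: "(\<Sum>u\<in>V. c u) = 2" and c2: "\<And>v. v \<in> V \<Longrightarrow> (\<Sum>u\<in>V. Bd E v u * c u) = 3"
    using apex_pot[OF sg _ x2] unfolding c_def by auto
  have sym: "Bd E u v = Bd E v u" for u v using simple_sym[OF sg] unfolding Bd_def by auto
  have "(\<Sum>v\<in>V. c v * (\<Sum>u\<in>V. Bd E v u * a u)) = (\<Sum>v\<in>V. \<Sum>u\<in>V. c v * Bd E v u * a u)"
    by (simp add: sum_distrib_left mult.assoc)
  also have "\<dots> = (\<Sum>u\<in>V. \<Sum>v\<in>V. c v * Bd E v u * a u)" by (rule sum.swap)
  also have "\<dots> = (\<Sum>u\<in>V. a u * (\<Sum>v\<in>V. Bd E u v * c v))"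
    by (simp add: sum_distrib_left sym mult.commute mult.left_commute)
  finally have eq: "(\<Sum>v\<in>V. c v * (\<Sum>u\<in>V. Bd E v u * a u)) = (\<Sum>u\<in>V. a u * (\<Sum>v\<in>V. Bd E u v * c v))" .
  have "(\<Sum>v\<in>V. c v * (\<Sum>u\<in>V. Bd E v u * a u)) = (\<Sum>v\<in>V. c v) * 2"
    using a2 by (simp add: sum_distrib_right)
  then have L4: "(\<Sum>v\<in>V. c v * (\<Sum>u\<in>V. Bd E v u * a u)) = 4" using c1 by simp
  have "(\<Sum>u\<in>V. a u * (\<Sum>v\<in>V. Bd E u v * c v)) = (\<Sum>u\<in>V. a u) * 3"
    using c2 by (simp add: sum_distrib_right)
  then have "(\<Sum>u\<in>V. a u * (\<Sum>v\<in>V. Bd E u v * c v)) = 3" using a1 by simp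
  then show False using eq L4 by simp
qed

theorem theorem5p3:
  fixes V :: "'a set" and E :: "'a \<Rightarrow> 'a \<Rightarrow> bool"
  assumes "simple_graph V E"
  shows "(\<exists>(V'' :: nat set) E'' f. simple_graph V'' E'' \<and> connected_graph V'' E''
             \<and> distance_exceptional V'' E'' \<and> induced_embedding V E V'' E'' f)
       \<and> (connected_graph V E \<and> curvature_index V E < \<infinity> \<longrightarrow>
           (\<exists>(V'' :: nat set) E'' f. simple_graph V'' E'' \<and> connected_graph V'' E''
             \<and> distance_exceptional V'' E'' \<and> induced_embedding V E V'' E'' f
             \<and> (\<forall>u\<in>V. \<forall>v\<in>V. gdist E'' (f u) (f v) = gdist E u v)))"
proof (intro conjI impI)
  obtain k where k: "k \<ge> 1" and H: "distance_exceptional (aV V k) (aE E V k)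
      \<or> (\<exists>x. curvature_potential (aV V k) (aE E V k) x \<and> (\<Sum>v\<in>aV V k. x v) \<noteq> 0)"
    using apex_good[OF assms] by blast
  obtain V'' :: "nat set" and E'' f where m: "simple_graph V'' E''" "connected_graph V'' E''"
      "distance_exceptional V'' E''" "induced_embedding (aV V k) (aE E V k) V'' E'' f"
    using mainlem[OF apex_simple[OF assms k] apex_conn[OF assms k] H] by blast
  have e1: "induced_embedding V E (aV V k) (aE E V k) Inl" by (rule apex_emb[OF assms k])
  have sub: "Inl ` V \<subseteq> aV V k" and ee: "\<forall>u\<in>V. \<forall>v\<in>V. aE E V k (Inl u) (Inl v) = E u v"
    using e1 unfolding induced_embedding_def by blast+
  have fi: "inj_on f (aV V k)" and fs: "f ` aV V k \<subseteq> V''"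
    and fe: "\<forall>u\<in>aV V k. \<forall>v\<in>aV V k. E'' (f u) (f v) = aE E V k u v"
    using m(4) unfolding induced_embedding_def by blast+
  have "induced_embedding V E V'' E'' (f \<circ> Inl)"
    unfolding induced_embedding_def
  proof (intro conjI ballI)
    show "inj_on (f \<circ> Inl) V" using fi sub by (meson comp_inj_on inj_Inl inj_on_subset subset_UNIV)
    show "(f \<circ> Inl) ` V \<subseteq> V''" using fs sub by auto
    fix u v assume uv: "u \<in> V" "v \<in> V"
    then have "Inl u \<in> aV V k" "Inl v \<in> aV V k" using sub by auto
    then show "E'' ((f \<circ> Inl) u) ((f \<circ> Inl) v) = E u v" using fe ee uv by simp
  qed
  then show "\<exists>(V'' :: nat set) E'' f. simple_graph V'' E'' \<and> connected_graph V'' E''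
             \<and> distance_exceptional V'' E'' \<and> induced_embedding V E V'' E'' f"
    using m by blast
next
  assume a: "connected_graph V E \<and> curvature_index V E < \<infinity>"
  have H: "distance_exceptional V E \<or> (\<exists>x. curvature_potential V E x \<and> (\<Sum>v\<in>V. x v) \<noteq> 0)"
  proof (rule ccontr)
    assume n: "\<not> (distance_exceptional V E \<or> (\<exists>x. curvature_potential V E x \<and> (\<Sum>v\<in>V. x v) \<noteq> 0))"
    have "curvature_index V E = \<infinity>" unfolding curvature_index_def using n by (simp only: if_False)
    then show False using a by simp
  qed
  show "\<exists>(V'' :: nat set) E'' f. simple_graph V'' E'' \<and> connected_graph V'' E''
             \<and> distance_exceptional V'' E'' \<and> induced_embedding V E V'' E'' f
             \<and> (\<forall>u\<in>V. \<forall>v\<in>V. gdist E'' (f u) (f v) = gdist E u v)"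
    using mainlem[OF assms _ H] a by blast
qed

end
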